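(* Let $\Sigma$ be an $n\times n$ positive definite matrix and $\Omega=\Sigma^{-1}$. Suppose there is $\alpha\neq 0$ such that $\Sigma_{i,n-1}=\alpha\,\Sigma_{i,n}$ for all $i\neq n-1$. Then in the conditional independence structure of $\Sigma$, node $n-1$ is a leaf connected to node $n$; that is, $\Omega_{n-1,i}=0$ for all $i\notin\{n-1,n\}$ and $\Omega_{n-1,n}\neq 0$.
   Context: The conditional independence structure of a positive definite $\Sigma$ is the graph on $\{1,\dots,n\}$ with an edge $\{i,j\}$ ($i\neq j$) iff $(\Sigma^{-1})_{ij}\neq 0$. *)

theory Defs
  imports "Jordan_Normal_Form.Matrix"
begin

definition pos_def_mat :: "nat \<Rightarrow> real mat \<Rightarrow> bool" where
  "pos_def_mat n A \<longleftrightarrow> A \<in> carrier_mat n n \<and> transpose_mat A = A \<and>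
     (\<forall>v \<in> carrier_vec n. v \<noteq> 0\<^sub>v n \<longrightarrow> v \<bullet> (A *\<^sub>v v) > 0)"

end

theory Submission
  imports Defs
begin

theorem lemma1:
  fixes n :: nat and Sigma Omega :: "real mat" and alpha :: real
  assumes "n \<ge> 2"
    and "pos_def_mat n Sigma"
    and "Omega \<in> carrier_mat n n"
    and "Sigma * Omega = 1\<^sub>m n" and "Omega * Sigma = 1\<^sub>m n"
    and "alpha \<noteq> 0"
    and "\<forall>i<n. i \<noteq> n - 2 \<longrightarrow> Sigma $$ (i, n - 2) = alpha * Sigma $$ (i, n - 1)"
  shows "(\<forall>i<n. i \<noteq> n - 2 \<and> i \<noteq> n - 1 \<longrightarrow> Omega $$ (n - 2, i) = 0)
         \<and> Omega $$ (n - 2, n - 1) \<noteq> 0"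
proof -
  define a where "a = n - 2"
  define b where "b = n - 1"
  have ab: "a < n" "b < n" "a \<noteq> b" using assms(1) unfolding a_def b_def by auto
  have S: "Sigma \<in> carrier_mat n n" and T: "transpose_mat Sigma = Sigma"
    using assms(2) unfolding pos_def_mat_def by auto
  have sym: "Sigma $$ (i, j) = Sigma $$ (j, i)" if "i < n" "j < n" for i j
  proof -
    have "transpose_mat Sigma $$ (i, j) = Sigma $$ (j, i)"
      using S that by (simp add: index_transpose_mat)
    then show ?thesis using T by simp
  qed
  define c where "c = Sigma $$ (a, a) - alpha * Sigma $$ (b, a)"
  have row: "Sigma $$ (a, j) - alpha * Sigma $$ (b, j) = (if j = a then c else 0)"
    if "j < n" for j
  proof (cases "j = a")
    case True then show ?thesis by (simp add: c_def)
  next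
    case False
    then have "Sigma $$ (j, a) = alpha * Sigma $$ (j, b)"
      using assms(7) that unfolding a_def b_def by auto
    then show ?thesis using sym[OF ab(1) that] sym[OF ab(2) that] False by simp
  qed
  have prod: "(Sigma * Omega) $$ (k, i) = (\<Sum>j<n. Sigma $$ (k, j) * Omega $$ (j, i))"
    if "k < n" "i < n" for k i
    using S assms(3) that
    by (simp add: index_mult_mat scalar_prod_def row_def col_def lessThan_atLeast0)
  have key: "(if a = i then 1 else 0) - alpha * (if b = i then 1 else 0) = c * Omega $$ (a, i)"
    if "i < n" for i
  proof -
    have "(if a = i then 1 else 0) - alpha * (if b = i then 1 else 0)
        = (Sigma * Omega) $$ (a, i) - alpha * (Sigma * Omega) $$ (b, i)"
      using assms(4) ab that by simp
    also have "\<dots> = (\<Sum>j<n. (Sigma $$ (a, j) - alpha * Sigma $$ (b, j)) * Omega $$ (j, i))"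
      using prod ab that by (simp add: sum_distrib_left sum_subtractf algebra_simps)
    also have "\<dots> = (\<Sum>j<n. (if j = a then c * Omega $$ (a, i) else 0))"
      by (rule sum.cong) (auto simp: row)
    also have "\<dots> = c * Omega $$ (a, i)" using ab by simp
    finally show ?thesis .
  qed
  have "c \<noteq> 0" using key[OF ab(1)] ab by auto
  have r1: "\<forall>i<n. i \<noteq> a \<and> i \<noteq> b \<longrightarrow> Omega $$ (a, i) = 0"
    using key \<open>c \<noteq> 0\<close> by force
  have "Omega $$ (a, b) \<noteq> 0" using key[OF ab(2)] ab \<open>c \<noteq> 0\<close> assms(6) by auto
  with r1 show ?thesis unfolding a_def b_def by blast
qed

end
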